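(* Let $\hat\sigma_1,\hat\sigma_2,\hat\sigma_3$ be the Pauli matrices, let $\alpha_1,\alpha_2,\alpha_3\in\mathbb{R}$, and let $$\Omega = e^{-i(\alpha_1\hat\sigma_1\otimes\hat\sigma_1+\alpha_2\hat\sigma_2\otimes\hat\sigma_2+\alpha_3\hat\sigma_3\otimes\hat\sigma_3)}.$$ Let $\mathcal{S}=\{n\pi/2 : n\in\{0,1,2,\dots\}\}$ and suppose exactly one of $\alpha_1,\alpha_2,\alpha_3$ lies in $\mathcal{S}$ (a "two-parameter family"). Let $U=(\mathcal{L}_1\otimes\mathcal{L}_2)\,\Omega\,(\mathcal{R}_1\otimes\mathcal{R}_2)$ for arbitrary single-qubit unitaries $\mathcal{L}_1,\mathcal{L}_2,\mathcal{R}_1,\mathcal{R}_2$. Then for every two-qubit density operator $\rho^{SE}$ on $\mathbb{C}^2_S\otimes\mathbb{C}^2_E$ there exist a single-qubit unitary $V$ acting on $S$ (whose induced rotation $\mathcal{O}_V\in SO(3)$ on the Bloch/correlation indices is a product of Givens rotations) and a single-qubit density operator $\zeta^E$ such that $$\operatorname{Tr}_E\big[U (V\otimes\mathbb{I})\rho^{SE}(V^\dagger\otimes\mathbb{I})U^\dagger\big]=\operatorname{Tr}_E\big[U\big(V\rho^S V^\dagger\otimes\zeta^E\big)U^\dagger\big],$$ where $\rho^S=\operatorname{Tr}_E\rho^{SE}$; i.e. after applying $V$ on the system, the system dynamics are $U$-generated by a product state.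
   Context: For a global two-qubit unitary $U$ and a joint state $\tau^{SE}$ with $\tau^S=\operatorname{Tr}_E\tau^{SE}$, the system dynamics $\tau^S\mapsto\operatorname{Tr}_E(U\tau^{SE}U^\dagger)$ are said to be $U$-generated by a product state if there is a valid single-qubit density operator $\zeta^E$ with $\operatorname{Tr}_E(U\tau^{SE}U^\dagger)=\operatorname{Tr}_E(U(\tau^S\otimes\zeta^E)U^\dagger)$. A local unitary $V$ on the system induces the orthogonal matrix $\mathcal{O}_{ij}=\tfrac12\operatorname{Tr}(\hat\sigma_i V\hat\sigma_j V^\dagger)$, which acts on the system Bloch vector and on the left of the correlation matrix $t_{ij}=\operatorname{Tr}(\rho^{SE}\hat\sigma_i\otimes\hat\sigma_j)$. A Givens rotation is a $3\times3$ rotation by an angle $\theta$ in a coordinate plane $(i,j)$: identity on the remaining coordinate, entries $\cos\theta$ at $(i,i),(j,j)$, and $\mp\sin\theta$ off-diagonal. *)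

theory Defs
  imports "HOL-Analysis.Analysis"
begin

text \<open>Single-qubit operators: complex^2^2. Two-qubit operators on C^2_S (x) C^2_E:
  complex^(2*2)^(2*2), the pair index (i,k) meaning |i>_S (x) |k>_E.\<close>

type_synonym qop = "complex^2^2"
type_synonym qqop = "complex^(2 \<times> 2)^(2 \<times> 2)"

definition adj :: "complex^'n^'m \<Rightarrow> complex^'m^'n" where
  "adj A = (\<chi> i j. cnj (A $ j $ i))"

definition unitary_op :: "complex^'n^'n \<Rightarrow> bool" where
  "unitary_op U \<longleftrightarrow> adj U ** U = mat 1 \<and> U ** adj U = mat 1"

text \<open>Density operator: positive semidefinite with unit trace.\<close>
definition density :: "complex^'n^'n \<Rightarrow> bool" where
  "density \<rho> \<longleftrightarrow>
     (\<forall>v :: complex^'n. Im (\<Sum>i\<in>UNIV. cnj (v $ i) * (\<rho> *v v) $ i) = 0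
                      \<and> 0 \<le> Re (\<Sum>i\<in>UNIV. cnj (v $ i) * (\<rho> *v v) $ i))
     \<and> trace \<rho> = 1"

text \<open>Kronecker (tensor) product and partial trace over E.\<close>
definition tensor :: "qop \<Rightarrow> qop \<Rightarrow> qqop" (infixr "\<otimes>\<^sub>q" 75) where
  "A \<otimes>\<^sub>q B = (\<chi> p q. A $ fst p $ fst q * B $ snd p $ snd q)"

definition ptrE :: "qqop \<Rightarrow> qop" where
  "ptrE M = (\<chi> i j. \<Sum>k\<in>UNIV. M $ (i, k) $ (j, k))"

text \<open>Pauli matrices sigma_1, sigma_2, sigma_3, indexed by the elements 0, 1, 2 of type 3;
  basis of C^2 indexed by 0, 1 of type 2.\<close>
definition sx :: qop where
  "sx = (\<chi> i j. if i = j then 0 else 1)"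
definition sy :: qop where
  "sy = (\<chi> i j. if i = j then 0 else if i = 0 then - \<i> else \<i>)"
definition sz :: qop where
  "sz = (\<chi> i j. if i = j then (if i = 0 then 1 else -1) else 0)"

definition pauli :: "3 \<Rightarrow> qop" where
  "pauli k = (if k = 0 then sx else if k = 1 then sy else sz)"

text \<open>Matrix powers and the matrix exponential (entrywise power series).\<close>
fun mpow :: "complex^'n^'n \<Rightarrow> nat \<Rightarrow> complex^'n^'n" where
  "mpow A 0 = mat 1"
| "mpow A (Suc k) = A ** mpow A k"

definition mexp :: "complex^'n^'n \<Rightarrow> complex^'n^'n" where
  "mexp A = (\<chi> i j. \<Sum>k. (mpow A k) $ i $ j / of_nat (fact k))"

text \<open>Omega = exp(-i(a1 s1(x)s1 + a2 s2(x)s2 + a3 s3(x)s3)).\<close>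
definition Omega :: "real \<Rightarrow> real \<Rightarrow> real \<Rightarrow> qqop" where
  "Omega a1 a2 a3 = mexp (\<chi> p q. - \<i> * (of_real a1 * (sx \<otimes>\<^sub>q sx) $ p $ q
                                        + of_real a2 * (sy \<otimes>\<^sub>q sy) $ p $ q
                                        + of_real a3 * (sz \<otimes>\<^sub>q sz) $ p $ q))"

definition Sset :: "real set" where
  "Sset = {real n * pi / 2 | n :: nat. True}"

text \<open>Induced rotation O_ij = 1/2 Tr(sigma_i V sigma_j V^dagger) (a real number).\<close>
definition bloch_rot :: "qop \<Rightarrow> real^3^3" where
  "bloch_rot V = (\<chi> i j. Re (trace (pauli i ** V ** pauli j ** adj V) / 2))"

text \<open>Givens rotation by angle th in the coordinate plane (i,j), i \<noteq> j.\<close>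
definition givens :: "3 \<Rightarrow> 3 \<Rightarrow> real \<Rightarrow> real^3^3" where
  "givens i j th = (\<chi> r c.
      if r = i \<and> c = i then cos th
      else if r = j \<and> c = j then cos th
      else if r = i \<and> c = j then - sin th
      else if r = j \<and> c = i then sin th
      else if r = c then 1 else 0)"

definition is_givens :: "real^3^3 \<Rightarrow> bool" where
  "is_givens G \<longleftrightarrow> (\<exists>i j th. i \<noteq> j \<and> G = givens i j th)"

definition product_of_givens :: "real^3^3 \<Rightarrow> bool" where
  "product_of_givens M \<longleftrightarrow>
     (\<exists>gs. list_all is_givens gs \<and> M = foldr (**) gs (mat 1))"

end

theory Submission
  imports Defs
begin

(* ---- part T1 ---- *)


lemma sum3: "sum f (UNIV::3 set) = f 0 + f 1 + f 2"
proof -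
  have e: "(3::3) = 0" by simp
  have "sum f (UNIV::3 set) = f 1 + f 2 + f 0" using sum_3[of f] unfolding e .
  then show ?thesis by (simp add: add_ac)
qed
lemma sum2: "sum f (UNIV::2 set) = f 0 + f 1"
proof -
  have e: "(2::2) = 0" by simp
  have "sum f (UNIV::2 set) = f 1 + f 0" using sum_2[of f] unfolding e .
  then show ?thesis by (simp add: add_ac)
qed
lemma sum22: "sum f (UNIV::(2\<times>2) set) = f (0,0) + f (0,1) + f (1,0) + f (1,1)"
proof -
  have "sum f (UNIV::(2\<times>2) set) = sum f (UNIV \<times> UNIV)" by simp
  also have "... = (\<Sum>a\<in>UNIV. \<Sum>b\<in>UNIV. f (a,b))" by (simp add: sum.cartesian_product)
  also have "... = f (0,0) + f (0,1) + f (1,0) + f (1,1)" by (simp add: sum2 add_ac)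
  finally show ?thesis .
qed
lemma all2: "(\<forall>i::2. P i) \<longleftrightarrow> P 0 \<and> P 1"
  by (metis (full_types) exhaust_2 one_add_one zero_neq_one add_cancel_right_left)
lemma all3: "(\<forall>i::3. P i) \<longleftrightarrow> P 0 \<and> P 1 \<and> P 2"
proof -
  have e: "(3::3) = 0" by simp
  have "(\<forall>i::3. P i) \<longleftrightarrow> P 1 \<and> P 2 \<and> P 3" by (rule forall_3)
  then show ?thesis unfolding e by blast
qed
lemma all22: "(\<forall>i::2\<times>2. P i) \<longleftrightarrow> P (0,0) \<and> P (0,1) \<and> P (1,0) \<and> P (1,1)"
  by (simp only: split_paired_All all2 conj_assoc)

definition bellm :: "complex \<Rightarrow> complex \<Rightarrow> complex \<Rightarrow> complex \<Rightarrow> qqop" where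
 "bellm e1 e2 e3 e4 = (\<chi> p q. if p = q then (if fst p = snd p then (e1+e2)/2 else (e3+e4)/2)
     else if fst p \<noteq> fst q \<and> snd p \<noteq> snd q then (if fst p = snd p then (e1-e2)/2 else (e3-e4)/2) else 0)"

lemma bellm_mult: "bellm a1 a2 a3 a4 ** bellm b1 b2 b3 b4 = bellm (a1*b1) (a2*b2) (a3*b3) (a4*b4)"
  unfolding vec_eq_iff all22
  by (simp add: matrix_matrix_mult_def bellm_def sum22 field_simps)

lemma bellm_one: "mat 1 = bellm 1 1 1 1"
  unfolding vec_eq_iff all22 by (simp add: mat_def bellm_def)

lemma mpow_bellm: "mpow (bellm a1 a2 a3 a4) k = bellm (a1^k) (a2^k) (a3^k) (a4^k)"
  by (induction k) (simp_all add: bellm_one bellm_mult)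

lemma exp_sums: "(\<lambda>k. (x::complex)^k / of_nat (fact k)) sums exp x"
  using exp_converges[of x] by (simp add: scaleR_conv_of_real field_simps)

lemma ser_p: "(\<Sum>k. (a^k + b^k) / (2 * fact k)) = (exp a + exp b)/(2::complex)"
proof -
  have "(\<lambda>k. (a^k / of_nat (fact k) + b^k / of_nat (fact k)) / 2) sums ((exp a + exp b)/2)"
    using sums_divide[OF sums_add[OF exp_sums[of a] exp_sums[of b]], of 2] .
  moreover have "(\<lambda>k. (a^k / of_nat (fact k) + b^k / of_nat (fact k)) / 2) = (\<lambda>k. (a^k + b^k) / (2 * fact k))"
    by (simp add: fun_eq_iff field_simps)
  ultimately show ?thesis by (simp add: sums_iff)
qed
lemma ser_m: "(\<Sum>k. (a^k - b^k) / (2 * fact k)) = (exp a - exp b)/(2::complex)"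
proof -
  have "(\<lambda>k. (a^k / of_nat (fact k) - b^k / of_nat (fact k)) / 2) sums ((exp a - exp b)/2)"
    using sums_divide[OF sums_diff[OF exp_sums[of a] exp_sums[of b]], of 2] .
  moreover have "(\<lambda>k. (a^k / of_nat (fact k) - b^k / of_nat (fact k)) / 2) = (\<lambda>k. (a^k - b^k) / (2 * fact k))"
    by (simp add: fun_eq_iff field_simps)
  ultimately show ?thesis by (simp add: sums_iff)
qed

lemma mexp_bellm_entry: "(\<Sum>k. bellm (a1^k) (a2^k) (a3^k) (a4^k) $ i $ j / of_nat (fact k)) = bellm (exp a1) (exp a2) (exp a3) (exp a4) $ i $ j"
  by (auto simp: bellm_def ser_p ser_m)

lemma mexp_bellm: "mexp (bellm a1 a2 a3 a4) = bellm (exp a1) (exp a2) (exp a3) (exp a4)"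
  unfolding vec_eq_iff mexp_def mpow_bellm
  by (simp only: vec_lambda_beta mexp_bellm_entry) simp

lemma H_bell: "(\<chi> p q. - \<i> * (of_real a1 * (sx \<otimes>\<^sub>q sx) $ p $ q
                                        + of_real a2 * (sy \<otimes>\<^sub>q sy) $ p $ q
                                        + of_real a3 * (sz \<otimes>\<^sub>q sz) $ p $ q))
   = bellm (- \<i> * of_real (a3+a1-a2)) (- \<i> * of_real (a3-a1+a2)) (- \<i> * of_real (a1+a2-a3)) (\<i> * of_real (a1+a2+a3))"
  unfolding vec_eq_iff all22
  by (simp add: bellm_def tensor_def sx_def sy_def sz_def field_simps)

lemma Omega_bell: "Omega a1 a2 a3 = bellm (exp (- \<i> * of_real (a3+a1-a2))) (exp (- \<i> * of_real (a3-a1+a2))) (exp (- \<i> * of_real (a1+a2-a3))) (exp (\<i> * of_real (a1+a2+a3)))"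
  unfolding Omega_def H_bell mexp_bellm ..

(* ---- part T4 ---- *)


definition omm :: "complex \<Rightarrow> complex \<Rightarrow> complex \<Rightarrow> complex \<Rightarrow> qqop" where
 "omm p q r w = (\<chi> x y. if x = y then (if fst x = snd x then p else r)
     else if fst x \<noteq> fst y \<and> snd x \<noteq> snd y then (if fst x = snd x then q else w) else 0)"

lemma bellm_omm: "bellm e1 e2 e3 e4 = omm ((e1+e2)/2) ((e1-e2)/2) ((e3+e4)/2) ((e3-e4)/2)"
  by (simp add: bellm_def omm_def)

definition ptrS :: "qqop \<Rightarrow> qop" where "ptrS M = (\<chi> k l. \<Sum>i\<in>UNIV. M $ (i,k) $ (i,l))"
definition tau :: "qqop \<Rightarrow> 3 \<Rightarrow> 3 \<Rightarrow> complex" where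
  "tau Y i j = (\<Sum>p\<in>UNIV. \<Sum>q\<in>UNIV. Y $ p $ q * (pauli i \<otimes>\<^sub>q pauli j) $ q $ p)"
definition phi :: "complex \<Rightarrow> complex \<Rightarrow> complex \<Rightarrow> complex \<Rightarrow> 3 \<Rightarrow> 3 \<Rightarrow> qop" where
  "phi p q r w i j = ptrE (omm p q r w ** (pauli i \<otimes>\<^sub>q pauli j) ** adj (omm p q r w))"

lemma pauli_simps: "pauli 0 = sx" "pauli 1 = sy" "pauli 2 = sz"
  by (simp_all add: pauli_def)

lemma Phi_expand:
  assumes hE: "ptrE Y = 0" and hS: "ptrS Y = 0"
  shows "ptrE (omm p q r w ** Y ** adj (omm p q r w)) $ a $ b
       = (\<Sum>i\<in>UNIV. \<Sum>j\<in>UNIV. tau Y i j * phi p q r w i j $ a $ b) / 4"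
proof -
  have E: "\<And>i j. ptrE Y $ i $ j = 0" "\<And>i j. ptrS Y $ i $ j = 0" using hE hS by simp_all
  have E1: "Y$(0,0)$(0,0) + Y$(0,1)$(0,1) = 0" using E(1)[of 0 0] by (simp add: ptrE_def sum2)
  have E2: "Y$(0,0)$(1,0) + Y$(0,1)$(1,1) = 0" using E(1)[of 0 1] by (simp add: ptrE_def sum2)
  have E3: "Y$(1,0)$(0,0) + Y$(1,1)$(0,1) = 0" using E(1)[of 1 0] by (simp add: ptrE_def sum2)
  have E4: "Y$(1,0)$(1,0) + Y$(1,1)$(1,1) = 0" using E(1)[of 1 1] by (simp add: ptrE_def sum2)
  have S1: "Y$(0,0)$(0,0) + Y$(1,0)$(1,0) = 0" using E(2)[of 0 0] by (simp add: ptrS_def sum2)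
  have S2: "Y$(0,0)$(0,1) + Y$(1,0)$(1,1) = 0" using E(2)[of 0 1] by (simp add: ptrS_def sum2)
  have S3: "Y$(0,1)$(0,0) + Y$(1,1)$(1,0) = 0" using E(2)[of 1 0] by (simp add: ptrS_def sum2)
  have R: "Y$(0,1)$(0,1) = - Y$(0,0)$(0,0)" "Y$(1,0)$(1,0) = - Y$(0,0)$(0,0)"
     "Y$(1,1)$(1,1) = Y$(0,0)$(0,0)" "Y$(0,1)$(1,1) = - Y$(0,0)$(1,0)"
     "Y$(1,1)$(0,1) = - Y$(1,0)$(0,0)" "Y$(1,0)$(1,1) = - Y$(0,0)$(0,1)"
     "Y$(1,1)$(1,0) = - Y$(0,1)$(0,0)"
    using E1 E2 E3 E4 S1 S2 S3 by (simp_all add: eq_neg_iff_add_eq_0 add.commute)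
       (metis add.commute add_eq_0_iff2 E4 S1)
  have "\<forall>a b. ptrE (omm p q r w ** Y ** adj (omm p q r w)) $ a $ b
       = (\<Sum>i\<in>UNIV. \<Sum>j\<in>UNIV. tau Y i j * phi p q r w i j $ a $ b) / 4"
    unfolding tau_def phi_def all2
    by (simp add: sum3 sum22 sum2 pauli_simps sx_def sy_def sz_def ptrE_def omm_def tensor_def adj_def
                  matrix_matrix_mult_def R algebra_simps)
  then show ?thesis by blast
qed

lemmas phi_unf = phi_def sum22 sum2 pauli_simps sx_def sy_def sz_def ptrE_def omm_def tensor_def adj_def matrix_matrix_mult_def

lemma phi00: "phi p q r w 0 0 = (\<chi> a b. if a = b then cnj p * q + cnj q * p + (cnj r * w + cnj w * r) else 0)"
  unfolding vec_eq_iff all2 by (simp add: phi_unf algebra_simps)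
lemma phi11: "phi p q r w 1 1 = (\<chi> a b. if a = b then (cnj r * w + cnj w * r) - (cnj p * q + cnj q * p) else 0)"
  unfolding vec_eq_iff all2 by (simp add: phi_unf algebra_simps)
lemma phi22: "phi p q r w 2 2 = (\<chi> a b. if a = b then (cnj p * p + cnj q * q) - (cnj r * r + cnj w * w) else 0)"
  unfolding vec_eq_iff all2 by (simp add: phi_unf algebra_simps)
lemma phi02: "phi p q r w 0 2 = (\<chi> a b. if a = b then 0 else if a = 0 then (cnj r * p - cnj p * r) + (cnj q * w - cnj w * q)
     else - ((cnj r * p - cnj p * r) + (cnj q * w - cnj w * q)))"
  unfolding vec_eq_iff all2 by (simp add: phi_unf algebra_simps)
lemma phi12: "phi p q r w 1 2 = (\<chi> a b. if a = b then 0 else \<i> * (cnj p * r - cnj r * p) + \<i> * (cnj q * w - cnj w * q))"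
  unfolding vec_eq_iff all2 by (simp add: phi_unf algebra_simps)

definition k01 where "k01 p q r w = \<i> * (cnj p * q - cnj q * p) - \<i> * (cnj r * w - cnj w * r)"
definition k10 where "k10 p q r w = \<i> * (cnj p * q - cnj q * p) + \<i> * (cnj r * w - cnj w * r)"

lemma phi01: "phi p q r w 0 1 = (\<chi> a b. if a = b then (if a = 0 then k01 p q r w else - k01 p q r w) else 0)"
  unfolding vec_eq_iff all2 by (simp add: phi_unf k01_def algebra_simps)
lemma phi10: "phi p q r w 1 0 = (\<chi> a b. if a = b then (if a = 0 then k10 p q r w else - k10 p q r w) else 0)"
  unfolding vec_eq_iff all2 by (simp add: phi_unf k10_def algebra_simps)

lemma Phi_zero:
  assumes hE: "ptrE Y = 0" and hS: "ptrS Y = 0"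
    and H1: "cnj p * q + cnj q * p = 0" and H2: "cnj r * w + cnj w * r = 0"
    and H3: "cnj p * p + cnj q * q = cnj r * r + cnj w * w"
    and H4: "cnj p * r = cnj r * p" and H5: "cnj q * w = cnj w * q"
    and T1: "tau Y 2 0 = 0" and T2: "tau Y 2 1 = 0"
    and K: "k01 p q r w * tau Y 0 1 + k10 p q r w * tau Y 1 0 = 0"
  shows "ptrE (omm p q r w ** Y ** adj (omm p q r w)) = 0"
proof -
  have Z: "phi p q r w 0 0 = 0" "phi p q r w 1 1 = 0" "phi p q r w 2 2 = 0"
          "phi p q r w 0 2 = 0" "phi p q r w 1 2 = 0"
    by (simp_all only: phi00 phi11 phi22 phi02 phi12 H1 H2 H3 H4 H5)
       (simp_all add: vec_eq_iff)
  have K': "tau Y 0 1 * k01 p q r w + tau Y 1 0 * k10 p q r w = 0" using K by (simp add: mult.commute)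
  then have K'': "tau Y 0 1 * k01 p q r w = - (tau Y 1 0 * k10 p q r w)" by (simp add: eq_neg_iff_add_eq_0)
  have "\<forall>a b. ptrE (omm p q r w ** Y ** adj (omm p q r w)) $ a $ b = 0"
  proof (intro allI)
    fix a b :: 2
    show "ptrE (omm p q r w ** Y ** adj (omm p q r w)) $ a $ b = 0"
      unfolding Phi_expand[OF hE hS] sum3
      using K' K'' by (simp add: Z phi01 phi10 T1 T2 algebra_simps)
  qed
  then show ?thesis by (simp add: vec_eq_iff)
qed


(* ---- part T5 ---- *)


lemma adj_mult: "adj ((A::complex^'n^'m) ** B) = adj B ** adj A"
  by (simp add: vec_eq_iff adj_def matrix_matrix_mult_def cnj_sum mult.commute)
lemma adj_adj[simp]: "adj (adj A) = A"
  by (simp add: vec_eq_iff adj_def)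
lemma adj_mat1[simp]: "adj (mat 1 :: complex^'n^'n) = mat 1"
  by (simp add: vec_eq_iff adj_def mat_def)
lemma adj_diff: "adj (A - B) = adj A - adj B"
  by (simp add: vec_eq_iff adj_def)
lemma adj_tensor: "adj (A \<otimes>\<^sub>q B) = adj A \<otimes>\<^sub>q adj B"
  by (simp add: vec_eq_iff adj_def tensor_def)
lemma tensor_mult: "(A \<otimes>\<^sub>q B) ** (C \<otimes>\<^sub>q D) = (A ** C) \<otimes>\<^sub>q (B ** D)"
  unfolding vec_eq_iff all22
  by (simp add: tensor_def matrix_matrix_mult_def sum22 sum2 algebra_simps)
lemma tensor_one: "mat 1 \<otimes>\<^sub>q mat 1 = mat 1"
  unfolding vec_eq_iff all22 all2 by (simp add: tensor_def mat_def)
lemma mat_sub_ldistrib: "(A::'a::ring_1^'n^'m) ** (B - C) = A ** B - A ** C"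
  by (simp add: vec_eq_iff matrix_matrix_mult_def sum_subtractf algebra_simps)
lemma mat_sub_rdistrib: "((A::'a::ring_1^'n^'m) - B) ** C = A ** C - B ** C"
  by (simp add: vec_eq_iff matrix_matrix_mult_def sum_subtractf algebra_simps)
lemma ptrE_diff: "ptrE (A - B) = ptrE A - ptrE B"
  by (simp add: vec_eq_iff ptrE_def sum_subtractf)
lemma ptrS_diff: "ptrS (A - B) = ptrS A - ptrS B"
  by (simp add: vec_eq_iff ptrS_def sum_subtractf)

lemma unit_cols: assumes "adj B ** B = mat 1"
  shows "(\<Sum>k\<in>UNIV. (B::qop)$k$l * cnj (B$k$m)) = (if l = m then 1 else 0)"
proof -
  have "(adj B ** B) $ m $ l = mat 1 $ m $ l" using assms by simp
  then show ?thesis by (simp add: adj_def matrix_matrix_mult_def mat_def mult.commute eq_commute)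
qed

lemma ptrE_conj_gen: "ptrE ((A \<otimes>\<^sub>q B) ** M ** adj (A \<otimes>\<^sub>q B)) $ i $ j =
  (\<Sum>a\<in>UNIV. \<Sum>b\<in>UNIV. \<Sum>l\<in>UNIV. \<Sum>m\<in>UNIV. A$i$a * cnj (A$j$b) * M$(a,l)$(b,m) * (\<Sum>k\<in>UNIV. B$k$l * cnj (B$k$m)))"
  by (simp add: ptrE_def matrix_matrix_mult_def tensor_def adj_def sum22 sum2 algebra_simps)

lemma ptrE_conj: assumes "adj B ** B = mat 1"
  shows "ptrE ((A \<otimes>\<^sub>q B) ** M ** adj (A \<otimes>\<^sub>q B)) = A ** ptrE M ** adj A"
  unfolding vec_eq_iff ptrE_conj_gen unit_cols[OF assms]
  by (simp add: ptrE_def matrix_matrix_mult_def adj_def sum2 algebra_simps)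

lemma ptrS_conj_gen: "ptrS ((A \<otimes>\<^sub>q B) ** M ** adj (A \<otimes>\<^sub>q B)) $ i $ j =
  (\<Sum>a\<in>UNIV. \<Sum>b\<in>UNIV. \<Sum>l\<in>UNIV. \<Sum>m\<in>UNIV. B$i$a * cnj (B$j$b) * M$(l,a)$(m,b) * (\<Sum>k\<in>UNIV. A$k$l * cnj (A$k$m)))"
  by (simp add: ptrS_def matrix_matrix_mult_def tensor_def adj_def sum22 sum2 algebra_simps)

lemma ptrS_conj: assumes "adj A ** A = mat 1"
  shows "ptrS ((A \<otimes>\<^sub>q B) ** M ** adj (A \<otimes>\<^sub>q B)) = B ** ptrS M ** adj B"
  unfolding vec_eq_iff ptrS_conj_gen unit_cols[OF assms]
  by (simp add: ptrS_def matrix_matrix_mult_def adj_def sum2 algebra_simps)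

lemma ptrE_tensor: "ptrE (X \<otimes>\<^sub>q Z) = (\<chi> i j. trace Z * X $ i $ j)"
  by (simp add: vec_eq_iff ptrE_def tensor_def trace_def sum2 algebra_simps)
lemma ptrS_tensor: "ptrS (X \<otimes>\<^sub>q Z) = (\<chi> i j. trace X * Z $ i $ j)"
  by (simp add: vec_eq_iff ptrS_def tensor_def trace_def sum2 algebra_simps)


(* ---- part T6 ---- *)


definition Oc :: "qop \<Rightarrow> 3 \<Rightarrow> 3 \<Rightarrow> complex" where
  "Oc A i k = trace (pauli i ** A ** pauli k ** adj A) / 2"

lemmas pa_unf = pauli_simps sx_def sy_def sz_def

lemma Oc_real: "cnj (Oc A i k) = Oc A i k"
proof -
  have "\<forall>i k. cnj (Oc A i k) = Oc A i k"
    unfolding all3 by (simp add: Oc_def trace_def sum2 matrix_matrix_mult_def adj_def pa_unf algebra_simps)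
  then show ?thesis by blast
qed

lemma Oc_of_real: "Oc A i k = of_real (bloch_rot A $ i $ k)"
proof -
  have "Oc A i k \<in> \<real>" using Oc_real[of A i k] by (simp add: Reals_cnj_iff)
  then have "Oc A i k = of_real (Re (Oc A i k))" by (simp add: of_real_Re)
  also have "Re (Oc A i k) = bloch_rot A $ i $ k" by (simp add: bloch_rot_def Oc_def)
  finally show ?thesis .
qed

lemma Oc_mult_gen: "Oc (A ** B) i j = (\<Sum>k\<in>UNIV. Oc A i k * Oc B k j) + trace (B ** pauli j ** adj B) * trace (pauli i ** A ** adj A) / 4"
proof -
  have "\<forall>i j. Oc (A ** B) i j = (\<Sum>k\<in>UNIV. Oc A i k * Oc B k j) + trace (B ** pauli j ** adj B) * trace (pauli i ** A ** adj A) / 4"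
    unfolding all3 by (simp add: Oc_def trace_def sum2 sum3 matrix_matrix_mult_def adj_def pa_unf field_simps)
  then show ?thesis by blast
qed

lemma trace_pauli: "trace (pauli j) = 0"
proof -
  have "\<forall>j. trace (pauli j) = 0" unfolding all3 by (simp add: trace_def sum2 pa_unf)
  then show ?thesis by blast
qed

lemma Oc_mult: assumes "adj B ** B = mat 1"
  shows "Oc (A ** B) i j = (\<Sum>k\<in>UNIV. Oc A i k * Oc B k j)"
proof -
  have "trace (B ** pauli j ** adj B) = trace (pauli j ** (adj B ** B))"
    by (metis matrix_mul_assoc trace_mul_sym)
  then have "trace (B ** pauli j ** adj B) = 0" using assms by (simp add: trace_pauli)
  then show ?thesis by (simp add: Oc_mult_gen)
qed

lemma Oc_one: "Oc (mat 1) i j = (if i = j then 1 else 0)"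
proof -
  have "\<forall>i j. Oc (mat 1) i j = (if i = j then 1 else 0)"
    unfolding all3 by (simp add: Oc_def trace_def sum2 matrix_matrix_mult_def adj_def mat_def pa_unf)
  then show ?thesis by blast
qed

lemma Oc_adj: "Oc (adj A) i j = Oc A j i"
proof -
  have "\<forall>i j. Oc (adj A) i j = Oc A j i"
    unfolding all3 by (simp add: Oc_def trace_def sum2 matrix_matrix_mult_def adj_def pa_unf algebra_simps)
  then show ?thesis by blast
qed

lemma bloch_mult: assumes "adj B ** B = mat 1"
  shows "bloch_rot (A ** B) = bloch_rot A ** bloch_rot B"
proof -
  have "\<And>i j. of_real (bloch_rot (A ** B) $ i $ j) = (of_real ((bloch_rot A ** bloch_rot B) $ i $ j) :: complex)"
  proof -
    fix i j
    have "(of_real (bloch_rot (A ** B) $ i $ j) :: complex) = Oc (A ** B) i j" by (simp only: Oc_of_real)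
    also have "... = (\<Sum>k\<in>UNIV. Oc A i k * Oc B k j)" by (rule Oc_mult[OF assms])
    also have "... = (\<Sum>k\<in>UNIV. of_real (bloch_rot A $ i $ k) * of_real (bloch_rot B $ k $ j))" by (simp only: Oc_of_real)
    also have "... = of_real ((bloch_rot A ** bloch_rot B) $ i $ j)" by (simp add: matrix_matrix_mult_def)
    finally show "?thesis i j" .
  qed
  then show ?thesis by (simp add: vec_eq_iff)
qed

lemma bloch_one: "bloch_rot (mat 1) = mat 1"
proof -
  have "\<And>i j. of_real (bloch_rot (mat 1) $ i $ j) = (of_real (mat 1 $ i $ j) :: complex)"
  proof -
    fix i j
    have "(of_real (bloch_rot (mat 1) $ i $ j) :: complex) = Oc (mat 1) i j" by (simp only: Oc_of_real)
    also have "... = of_real (mat 1 $ i $ j)" by (simp only: Oc_one) (simp add: mat_def)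
    finally show "?thesis i j" .
  qed
  then show ?thesis by (simp add: vec_eq_iff)
qed

lemma bloch_adj: "bloch_rot (adj A) = transpose (bloch_rot A)"
proof -
  have "\<And>i j. of_real (bloch_rot (adj A) $ i $ j) = (of_real (transpose (bloch_rot A) $ i $ j) :: complex)"
  proof -
    fix i j
    have "(of_real (bloch_rot (adj A) $ i $ j) :: complex) = Oc (adj A) i j" by (simp only: Oc_of_real)
    also have "... = Oc A j i" by (rule Oc_adj)
    also have "... = of_real (transpose (bloch_rot A) $ i $ j)" by (simp add: Oc_of_real transpose_def)
    finally show "?thesis i j" .
  qed
  then show ?thesis by (simp add: vec_eq_iff)
qed

lemma bloch_orth: assumes "unitary_op A"
  shows "bloch_rot A ** transpose (bloch_rot A) = mat 1"
proof -
  have "adj (adj A) ** adj A = mat 1" using assms by (simp add: unitary_op_def)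
  then have "bloch_rot (A ** adj A) = bloch_rot A ** bloch_rot (adj A)" by (rule bloch_mult)
  moreover have "A ** adj A = mat 1" using assms by (simp add: unitary_op_def)
  ultimately show ?thesis by (simp add: bloch_one bloch_adj)
qed


(* ---- part T7 ---- *)


lemma tau_conj: assumes hS: "ptrS Y = 0"
  shows "tau ((A \<otimes>\<^sub>q mat 1) ** Y ** adj (A \<otimes>\<^sub>q mat 1)) i j = (\<Sum>k\<in>UNIV. Oc A i k * tau Y k j)"
proof -
  have E: "\<And>i j. ptrS Y $ i $ j = 0" using hS by simp
  have S1: "Y$(0,0)$(0,0) + Y$(1,0)$(1,0) = 0" using E[of 0 0] by (simp add: ptrS_def sum2)
  have S2: "Y$(0,0)$(0,1) + Y$(1,0)$(1,1) = 0" using E[of 0 1] by (simp add: ptrS_def sum2)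
  have S3: "Y$(0,1)$(0,0) + Y$(1,1)$(1,0) = 0" using E[of 1 0] by (simp add: ptrS_def sum2)
  have S4: "Y$(0,1)$(0,1) + Y$(1,1)$(1,1) = 0" using E[of 1 1] by (simp add: ptrS_def sum2)
  have R: "Y$(1,0)$(1,0) = - Y$(0,0)$(0,0)" "Y$(1,0)$(1,1) = - Y$(0,0)$(0,1)"
     "Y$(1,1)$(1,0) = - Y$(0,1)$(0,0)" "Y$(1,1)$(1,1) = - Y$(0,1)$(0,1)"
    using S1 S2 S3 S4 by (simp_all add: eq_neg_iff_add_eq_0 add.commute)
  have "\<forall>i j. tau ((A \<otimes>\<^sub>q mat 1) ** Y ** adj (A \<otimes>\<^sub>q mat 1)) i j = (\<Sum>k\<in>UNIV. Oc A i k * tau Y k j)"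
    unfolding all3
    by (simp add: tau_def Oc_def trace_def sum2 sum3 sum22 matrix_matrix_mult_def adj_def tensor_def mat_def pa_unf R field_simps)
  then show ?thesis by blast
qed

lemma tau_adj: "cnj (tau Y i j) = tau (adj Y) i j"
proof -
  have "\<forall>i j. cnj (tau Y i j) = tau (adj Y) i j"
    unfolding all3 by (simp add: tau_def sum22 tensor_def adj_def pa_unf algebra_simps)
  then show ?thesis by blast
qed

definition E01 :: "real \<Rightarrow> qop" where
  "E01 t = (\<chi> i j. if i = j then (if i = 0 then cis (- t) else cis t) else 0)"
definition E12 :: "real \<Rightarrow> qop" where
  "E12 t = (\<chi> i j. if i = j then complex_of_real (cos t) else - \<i> * complex_of_real (sin t))"

lemma E01_unitary: "unitary_op (E01 t)"
  unfolding unitary_op_def vec_eq_iff all2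
  by (simp add: E01_def adj_def matrix_matrix_mult_def mat_def sum2 cis_cnj cis_mult)

lemma cs1: "(complex_of_real (cos t))\<^sup>2 + (complex_of_real (sin t))\<^sup>2 = 1"
proof -
  have "complex_of_real ((cos t)\<^sup>2 + (sin t)\<^sup>2) = 1" by simp
  then show ?thesis by (simp only: of_real_add of_real_power)
qed

lemma sc: "sin (t::real) * sin t = 1 - cos t * cos t" "sin t * (sin t * x) = (1 - cos t * cos t) * x"
proof -
  have h: "sin t * sin t = 1 - cos t * cos t" using sin_cos_squared_add3[of t] by (simp add: algebra_simps)
  show "sin t * sin t = 1 - cos t * cos t" by (fact h)
  show "sin t * (sin t * x) = (1 - cos t * cos t) * x" by (simp add: mult.assoc[symmetric] h)
qed

lemma c2: "cos (2*(t::real)) = cos t * cos t - sin t * sin t" "sin (2*t) = 2 * sin t * cos t"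
  by (simp_all add: cos_double sin_double power2_eq_square)

lemma E12_unitary: "unitary_op (E12 t)"
  unfolding unitary_op_def vec_eq_iff all2
  by (simp add: E12_def adj_def matrix_matrix_mult_def mat_def sum2 algebra_simps
        cs1 flip: of_real_mult of_real_add power2_eq_square)

lemma bloch_E01: "bloch_rot (E01 t) = givens 0 1 (2 * t)"
  unfolding vec_eq_iff all3 givens_def c2
  by (simp add: bloch_rot_def E01_def trace_def sum2 matrix_matrix_mult_def adj_def pa_unf
      sc field_simps)

lemma bloch_E12: "bloch_rot (E12 t) = givens 1 2 (2 * t)"
  unfolding vec_eq_iff all3 givens_def c2
  by (simp add: bloch_rot_def E12_def trace_def sum2 matrix_matrix_mult_def adj_def pa_unf
      sc field_simps)


(* ---- part T8 ---- *)


lemma angle: "\<exists>t. cos t * sqrt (a\<^sup>2 + b\<^sup>2) = a \<and> sin t * sqrt (a\<^sup>2 + b\<^sup>2) = (b::real)"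
proof (cases "a\<^sup>2 + b\<^sup>2 = 0")
  case True
  then have "a = 0" "b = 0" by (simp_all add: sum_power2_eq_zero_iff)
  then show ?thesis by simp
next
  case False
  define r where "r = sqrt (a\<^sup>2 + b\<^sup>2)"
  have "0 \<le> a\<^sup>2 + b\<^sup>2" by simp
  with False have "0 < a\<^sup>2 + b\<^sup>2" by linarith
  then have rp: "r > 0" by (simp add: r_def)
  have r2: "r\<^sup>2 = a\<^sup>2 + b\<^sup>2" unfolding r_def by (simp add: add_nonneg_nonneg)
  have "(a/r)\<^sup>2 + (b/r)\<^sup>2 = (a\<^sup>2 + b\<^sup>2) / r\<^sup>2" by (simp add: power_divide add_divide_distrib)
  also have "... = 1" using r2 False by simp
  finally have "(a/r)\<^sup>2 + (b/r)\<^sup>2 = 1" .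
  then obtain t where "a/r = cos t" "b/r = sin t" by (rule sincos_total_2pi)
  then have "cos t * r = a" "sin t * r = b" using rp by (simp_all add: field_simps)
  then show ?thesis unfolding r_def by blast
qed

lemma givens01_apply: "givens 0 1 t *v x = (\<chi> i. if i = 0 then cos t * x$0 - sin t * x$1
   else if i = 1 then sin t * x$0 + cos t * x$1 else x$2)"
  unfolding vec_eq_iff all3 by (simp add: givens_def matrix_vector_mult_def sum3)
lemma givens12_apply: "givens 1 2 t *v x = (\<chi> i. if i = 0 then x$0
   else if i = 1 then cos t * x$1 - sin t * x$2 else sin t * x$1 + cos t * x$2)"
  unfolding vec_eq_iff all3 by (simp add: givens_def matrix_vector_mult_def sum3)

lemma kill12: "\<exists>t. (givens 1 2 t *v x) $ 2 = 0"
proof -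
  obtain t where t: "cos t * sqrt ((x$1)\<^sup>2 + (- x$2)\<^sup>2) = x$1" "sin t * sqrt ((x$1)\<^sup>2 + (- x$2)\<^sup>2) = - x$2"
    using angle by blast
  define r where "r = sqrt ((x$1)\<^sup>2 + (- x$2)\<^sup>2)"
  have t': "r * cos t = x$1" "r * sin t = - x$2" using t unfolding r_def[symmetric] by (simp_all add: mult.commute)
  have "r * (sin t * x$1 + cos t * x$2) = (r * sin t) * x$1 + (r * cos t) * x$2" by (simp add: algebra_simps)
  also have "... = 0" unfolding t' by simp
  finally have "r * (sin t * x$1 + cos t * x$2) = 0" .
  moreover have "r = 0 \<Longrightarrow> x$1 = 0 \<and> x$2 = 0" unfolding r_def by (simp add: sum_power2_eq_zero_iff)
  ultimately have "sin t * x$1 + cos t * x$2 = 0" by auto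
  then show ?thesis by (auto simp: givens12_apply)
qed

lemma kill01: "\<exists>t. (givens 0 1 t *v x) $ 1 = 0"
proof -
  obtain t where t: "cos t * sqrt ((x$0)\<^sup>2 + (- x$1)\<^sup>2) = x$0" "sin t * sqrt ((x$0)\<^sup>2 + (- x$1)\<^sup>2) = - x$1"
    using angle by blast
  define r where "r = sqrt ((x$0)\<^sup>2 + (- x$1)\<^sup>2)"
  have t': "r * cos t = x$0" "r * sin t = - x$1" using t unfolding r_def[symmetric] by (simp_all add: mult.commute)
  have "r * (sin t * x$0 + cos t * x$1) = (r * sin t) * x$0 + (r * cos t) * x$1" by (simp add: algebra_simps)
  also have "... = 0" unfolding t' by simp
  finally have "r * (sin t * x$0 + cos t * x$1) = 0" .
  moreover have "r = 0 \<Longrightarrow> x$0 = 0 \<and> x$1 = 0" unfolding r_def by (simp add: sum_power2_eq_zero_iff)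
  ultimately have "sin t * x$0 + cos t * x$1 = 0" by auto
  then show ?thesis by (auto simp: givens01_apply)
qed

lemma sc': "sin (t::real) * sin t = 1 - cos t * cos t" "sin t * (sin t * x) = (1 - cos t * cos t) * x"
proof -
  have h: "sin t * sin t = 1 - cos t * cos t" using sin_cos_squared_add3[of t] by (simp add: algebra_simps)
  show "sin t * sin t = 1 - cos t * cos t" by (fact h)
  show "sin t * (sin t * x) = (1 - cos t * cos t) * x" by (simp add: mult.assoc[symmetric] h)
qed

lemma givens01_orth: "transpose (givens 0 1 t) ** givens 0 1 t = mat 1"
  unfolding vec_eq_iff all3 by (simp add: givens_def transpose_def matrix_matrix_mult_def mat_def sum3 sc' algebra_simps)
lemma givens12_orth: "transpose (givens 1 2 t) ** givens 1 2 t = mat 1"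
  unfolding vec_eq_iff all3 by (simp add: givens_def transpose_def matrix_matrix_mult_def mat_def sum3 sc' algebra_simps)
lemma givens01_tr: "transpose (givens 0 1 t) = givens 0 1 (- t)"
  unfolding vec_eq_iff all3 by (simp add: givens_def transpose_def)
lemma givens12_tr: "transpose (givens 1 2 t) = givens 1 2 (- t)"
  unfolding vec_eq_iff all3 by (simp add: givens_def transpose_def)

lemma to_e3: assumes nx: "(x$0)\<^sup>2 + (x$1)\<^sup>2 + (x$2)\<^sup>2 = 1"
  shows "\<exists>t1 t2. (givens 1 2 t2 ** givens 0 1 t1) *v x = (\<chi> i. if i = 2 then 1 else 0)"
proof -
  define r1 where "r1 = sqrt ((x$1)\<^sup>2 + (x$0)\<^sup>2)"
  obtain t1 where t1: "cos t1 * r1 = x$1" "sin t1 * r1 = x$0" using angle unfolding r1_def by blast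
  define y where "y = givens 0 1 t1 *v x"
  have r1sq: "r1\<^sup>2 = (x$1)\<^sup>2 + (x$0)\<^sup>2" unfolding r1_def by simp
  have r1nn: "r1 \<ge> 0" unfolding r1_def by simp
  have y: "y$0 = cos t1 * x$0 - sin t1 * x$1" "y$1 = sin t1 * x$0 + cos t1 * x$1" "y$2 = x$2"
    unfolding y_def givens01_apply by simp_all
  have "r1 * y$0 = (cos t1 * r1) * x$0 - (sin t1 * r1) * x$1" unfolding y by (simp add: algebra_simps)
  also have "... = 0" unfolding t1 by simp
  finally have ry0: "r1 * y$0 = 0" .
  have "r1 * y$1 = (sin t1 * r1) * x$0 + (cos t1 * r1) * x$1" unfolding y by (simp add: algebra_simps)
  also have "... = r1 * r1" unfolding t1 using r1sq by (simp add: power2_eq_square)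
  finally have ry1: "r1 * y$1 = r1 * r1" .
  have y01: "y$0 = 0 \<and> y$1 = r1"
  proof (cases "r1 = 0")
    case True
    then have "x$0 = 0" "x$1 = 0" using r1sq by (simp_all add: sum_power2_eq_zero_iff)
    then show ?thesis using True y by simp
  next
    case False then show ?thesis using ry0 ry1 by simp
  qed
  have "(x$2)\<^sup>2 + r1\<^sup>2 = 1" using nx r1sq by simp
  then obtain t2 where t2: "x$2 = cos t2" "r1 = sin t2" by (rule sincos_total_2pi)
  have "(givens 1 2 t2 ** givens 0 1 t1) *v x = givens 1 2 t2 *v y"
    unfolding y_def by (simp add: matrix_vector_mul_assoc)
  also have "... = (\<chi> i. if i = 2 then 1 else 0)"
    unfolding givens12_apply vec_eq_iff all3 using y01 y(3) t2 sin_cos_squared_add[of t2]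
    by (simp add: power2_eq_square algebra_simps)
  finally show ?thesis by blast
qed

lemma killA: "\<exists>ta tb tc. ((givens 1 2 tc ** givens 0 1 tb ** givens 1 2 ta) *v c1)$2 = 0
     \<and> ((givens 1 2 tc ** givens 0 1 tb ** givens 1 2 ta) *v c2)$2 = 0"
proof -
  obtain ta where ta: "(givens 1 2 ta *v c1)$2 = 0" using kill12 by blast
  obtain tb where tb: "(givens 0 1 tb *v (givens 1 2 ta *v c1))$1 = 0" using kill01 by blast
  obtain tc where tc: "(givens 1 2 tc *v (givens 0 1 tb *v (givens 1 2 ta *v c2)))$2 = 0" using kill12 by blast
  have a1: "(givens 0 1 tb *v (givens 1 2 ta *v c1))$2 = 0" using ta by (simp add: givens01_apply)
  have "(givens 1 2 tc *v (givens 0 1 tb *v (givens 1 2 ta *v c1)))$2 = 0"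
    using a1 tb by (simp add: givens12_apply)
  then show ?thesis using tc by (auto simp: matrix_vector_mul_assoc matrix_mul_assoc)
qed

lemma construct:
  fixes N C :: "real^3^3" and k1 k2 :: real
  assumes orth: "N ** transpose N = mat 1"
  shows "\<exists>t1 t2 t3 t4 t5 t6.
     (N ** (givens 0 1 t1 ** givens 1 2 t2 ** givens 0 1 t3 ** givens 1 2 t4 ** givens 0 1 t5 ** givens 1 2 t6) ** C)$2$0 = 0
   \<and> (N ** (givens 0 1 t1 ** givens 1 2 t2 ** givens 0 1 t3 ** givens 1 2 t4 ** givens 0 1 t5 ** givens 1 2 t6) ** C)$2$1 = 0
   \<and> k1 * (N ** (givens 0 1 t1 ** givens 1 2 t2 ** givens 0 1 t3 ** givens 1 2 t4 ** givens 0 1 t5 ** givens 1 2 t6) ** C)$0$1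
     + k2 * (N ** (givens 0 1 t1 ** givens 1 2 t2 ** givens 0 1 t3 ** givens 1 2 t4 ** givens 0 1 t5 ** givens 1 2 t6) ** C)$1$0 = 0"
proof -
  define n where "n = N$2"
  have "(N ** transpose N)$2$2 = 1" using orth by (simp add: mat_def)
  then have nn: "(n$0)\<^sup>2 + (n$1)\<^sup>2 + (n$2)\<^sup>2 = 1"
    by (simp add: n_def matrix_matrix_mult_def transpose_def sum3 power2_eq_square)
  obtain t1 t2 where Bn: "(givens 1 2 t2 ** givens 0 1 t1) *v n = (\<chi> i. if i = 2 then 1 else 0)"
    using to_e3[OF nn] by blast
  define B where "B = givens 1 2 t2 ** givens 0 1 t1"
  have BtB: "transpose B ** B = mat 1"
  proof -
    have "transpose B ** B = transpose (givens 0 1 t1) ** (transpose (givens 1 2 t2) ** givens 1 2 t2) ** givens 0 1 t1"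
      unfolding B_def by (simp add: matrix_transpose_mul matrix_mul_assoc)
    also have "... = mat 1" by (simp add: givens12_orth givens01_orth)
    finally show ?thesis .
  qed
  have "transpose B *v (B *v n) = n" by (simp add: matrix_vector_mul_assoc BtB)
  then have "transpose B *v (\<chi> i. if i = 2 then 1 else 0) = n" using Bn unfolding B_def by simp
  then have B2: "\<And>k. B$2$k = n$k" by (auto simp: vec_eq_iff matrix_vector_mult_def transpose_def sum3)
  obtain ta tb tc where A0: "((givens 1 2 tc ** givens 0 1 tb ** givens 1 2 ta) *v (\<chi> i. C$i$0))$2 = 0"
     and A1: "((givens 1 2 tc ** givens 0 1 tb ** givens 1 2 ta) *v (\<chi> i. C$i$1))$2 = 0"
    using killA by blast
  define A where "A = givens 1 2 tc ** givens 0 1 tb ** givens 1 2 ta"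
  define D where "D = A ** C"
  have D20: "D$2$0 = 0" using A0 unfolding D_def A_def[symmetric] by (simp add: matrix_matrix_mult_def matrix_vector_mult_def)
  have D21: "D$2$1 = 0" using A1 unfolding D_def A_def[symmetric] by (simp add: matrix_matrix_mult_def matrix_vector_mult_def)
  define K where "K = N ** transpose B"
  have K2: "\<And>j. K$2$j = (if j = 2 then 1 else 0)"
  proof -
    fix j
    have "K$2$j = (B *v n)$j" unfolding K_def n_def
      by (simp add: matrix_matrix_mult_def matrix_vector_mult_def transpose_def mult.commute)
    then show "K$2$j = (if j = 2 then 1 else 0)" using Bn unfolding B_def by simp
  qed
  have Ki2: "\<And>i. K$i$2 = (N ** transpose N)$i$2"
    unfolding K_def by (simp add: matrix_matrix_mult_def transpose_def B2 n_def)
  have K02: "K$0$2 = 0" and K12: "K$1$2 = 0" using Ki2 orth by (simp_all add: mat_def)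
  define X where "X = k1 * (K$0$0 * D$0$1 + K$0$1 * D$1$1) + k2 * (K$1$0 * D$0$0 + K$1$1 * D$1$0)"
  define Y where "Y = k1 * (K$0$1 * D$0$1 - K$0$0 * D$1$1) + k2 * (K$1$1 * D$0$0 - K$1$0 * D$1$0)"
  obtain th where th: "cos th * sqrt (Y\<^sup>2 + (- X)\<^sup>2) = Y" "sin th * sqrt (Y\<^sup>2 + (- X)\<^sup>2) = - X"
    using angle by blast
  define r where "r = sqrt (Y\<^sup>2 + (- X)\<^sup>2)"
  have th': "r * cos th = Y" "r * sin th = - X" using th unfolding r_def[symmetric] by (simp_all add: mult.commute)
  have "r * (X * cos th + Y * sin th) = X * (r * cos th) + Y * (r * sin th)" by (simp add: algebra_simps)
  also have "... = 0" unfolding th' by simp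
  finally have "r * (X * cos th + Y * sin th) = 0" .
  moreover have "r = 0 \<Longrightarrow> X = 0 \<and> Y = 0" unfolding r_def by (simp add: sum_power2_eq_zero_iff)
  ultimately have XY: "X * cos th + Y * sin th = 0" by auto
  define G where "G = transpose B ** givens 0 1 th ** A"
  have Geq: "G = givens 0 1 (- t1) ** givens 1 2 (- t2) ** givens 0 1 th ** givens 1 2 tc ** givens 0 1 tb ** givens 1 2 ta"
    unfolding G_def B_def A_def by (simp add: matrix_transpose_mul givens01_tr givens12_tr matrix_mul_assoc)
  have Meq: "N ** G ** C = K ** givens 0 1 th ** D"
    unfolding G_def K_def D_def by (simp add: matrix_mul_assoc)
  have Ment: "\<And>i j. (K ** givens 0 1 th ** D)$i$j = (\<Sum>a\<in>UNIV. K$i$a * (\<Sum>b\<in>UNIV. givens 0 1 th $a$b * D$b$j))"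
    by (simp add: matrix_matrix_mult_def sum_distrib_right sum_distrib_left mult.assoc)
       (rule sum.swap)
  have M20: "(N ** G ** C)$2$0 = 0" unfolding Meq Ment
    by (simp add: sum3 K2 givens_def D20)
  have M21: "(N ** G ** C)$2$1 = 0" unfolding Meq Ment
    by (simp add: sum3 K2 givens_def D21)
  have "k1 * (N ** G ** C)$0$1 + k2 * (N ** G ** C)$1$0 = X * cos th + Y * sin th"
    unfolding Meq Ment X_def Y_def by (simp add: sum3 K02 K12 givens_def algebra_simps)
  with XY have M3: "k1 * (N ** G ** C)$0$1 + k2 * (N ** G ** C)$1$0 = 0" by simp
  show ?thesis using M20 M21 M3 unfolding Geq by blast
qed


(* ---- part T9 ---- *)


lemma md: "x * (if P then y else 0) = (if P then x * y else (0::complex))" by simp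
lemma md2: "(if P then y else 0) * x = (if P then y * x else (0::complex))" by simp

lemma cif: "cnj (if P then 1 else 0) = (if P then 1 else 0)" "cnj (if P then c else 0) = (if P then cnj c else 0)" by simp_all

lemma qf_one:
  fixes M :: "complex^'n^'n"
  shows "(\<Sum>i\<in>UNIV. cnj ((\<chi> k. if k = a then 1 else 0) $ i) * (M *v (\<chi> k. if k = a then 1 else 0)) $ i) = M$a$a"
proof -
  have mv: "\<And>i. (M *v (\<chi> k. if k = a then 1 else 0))$i = M$i$a"
    by (simp add: matrix_vector_mult_def md)
  show ?thesis by (simp add: mv cif md2)
qed

lemma qf_two:
  fixes M :: "complex^'n^'n"
  assumes ab: "a \<noteq> b"
  shows "(\<Sum>i\<in>UNIV. cnj ((\<chi> k. if k = a then 1 else if k = b then c else 0) $ i) * (M *v (\<chi> k. if k = a then 1 else if k = b then c else 0)) $ i)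
       = M$a$a + c * M$a$b + cnj c * (M$b$a + c * M$b$b)"
proof -
  define v :: "complex^'n" where "v = (\<chi> k. if k = a then 1 else if k = b then c else 0)"
  have v: "\<And>j. v$j = (if j = a then 1 else 0) + (if j = b then c else 0)" using ab by (simp add: v_def)
  have mv: "\<And>i. (M *v v)$i = M$i$a + c * M$i$b"
    by (simp add: matrix_vector_mult_def v distrib_left sum.distrib md mult.commute)
  have "(\<Sum>i\<in>UNIV. cnj (v$i) * (M *v v)$i) = M$a$a + c * M$a$b + cnj c * (M$b$a + c * M$b$b)"
    by (simp add: mv v distrib_right sum.distrib md2 cif)
  then show ?thesis unfolding v_def .
qed

lemma density_herm: assumes "density \<rho>" shows "adj \<rho> = \<rho>"
proof -
  have Q: "\<And>v. Im (\<Sum>i\<in>UNIV. cnj (v $ i) * (\<rho> *v v) $ i) = 0" using assms by (simp add: density_def)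
  have "\<And>a b. \<rho>$b$a = cnj (\<rho>$a$b)"
  proof -
    fix a b
    show "\<rho>$b$a = cnj (\<rho>$a$b)"
    proof (cases "a = b")
      case True
      have "Im (\<rho>$a$a) = 0" using Q[of "\<chi> k. if k = a then 1 else 0"] unfolding qf_one .
      then show ?thesis using True by (simp add: complex_eq_iff)
    next
      case False
      have h1: "Im (\<rho>$a$a + 1 * \<rho>$a$b + cnj 1 * (\<rho>$b$a + 1 * \<rho>$b$b)) = 0"
        using Q[of "\<chi> k. if k = a then 1 else if k = b then 1 else 0"] unfolding qf_two[OF False] .
      have h2: "Im (\<rho>$a$a + \<i> * \<rho>$a$b + cnj \<i> * (\<rho>$b$a + \<i> * \<rho>$b$b)) = 0"
        using Q[of "\<chi> k. if k = a then 1 else if k = b then \<i> else 0"] unfolding qf_two[OF False] .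
      have da: "Im (\<rho>$a$a) = 0" and db: "Im (\<rho>$b$b) = 0"
        using Q[of "\<chi> k. if k = a then 1 else 0"] Q[of "\<chi> k. if k = b then 1 else 0"] unfolding qf_one by blast+
      show ?thesis using h1 h2 da db by (simp add: complex_eq_iff algebra_simps)
    qed
  qed
  then have "\<And>a b. cnj (\<rho>$b$a) = \<rho>$a$b" by (metis complex_cnj_cnj)
  then show ?thesis by (simp add: vec_eq_iff adj_def)
qed

lemma adj_ptrE: "adj (ptrE M) = ptrE (adj M)"
  by (simp add: vec_eq_iff adj_def ptrE_def cnj_sum)
lemma adj_ptrS: "adj (ptrS M) = ptrS (adj M)"
  by (simp add: vec_eq_iff adj_def ptrS_def cnj_sum)

lemma qf_ptrS: "(\<Sum>k\<in>UNIV. cnj (w $ k) * (ptrS \<rho> *v w) $ k)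
   = (\<Sum>p\<in>UNIV. cnj ((\<chi> x. if fst x = 0 then w $ snd x else 0) $ p) * (\<rho> *v (\<chi> x. if fst x = 0 then w $ snd x else 0)) $ p)
   + (\<Sum>p\<in>UNIV. cnj ((\<chi> x. if fst x = 1 then w $ snd x else 0) $ p) * (\<rho> *v (\<chi> x. if fst x = 1 then w $ snd x else 0)) $ p)"
  by (simp add: ptrS_def matrix_vector_mult_def sum22 sum2 algebra_simps)

lemma density_ptrS: assumes "density \<rho>" shows "density (ptrS \<rho>)"
proof -
  have Q: "\<And>v. Im (\<Sum>i\<in>UNIV. cnj (v $ i) * (\<rho> *v v) $ i) = 0 \<and> 0 \<le> Re (\<Sum>i\<in>UNIV. cnj (v $ i) * (\<rho> *v v) $ i)"
    using assms by (simp add: density_def)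
  have "\<forall>w. Im (\<Sum>k\<in>UNIV. cnj (w $ k) * (ptrS \<rho> *v w) $ k) = 0 \<and> 0 \<le> Re (\<Sum>k\<in>UNIV. cnj (w $ k) * (ptrS \<rho> *v w) $ k)"
  proof
    fix w :: "complex^2"
    show "Im (\<Sum>k\<in>UNIV. cnj (w $ k) * (ptrS \<rho> *v w) $ k) = 0 \<and> 0 \<le> Re (\<Sum>k\<in>UNIV. cnj (w $ k) * (ptrS \<rho> *v w) $ k)"
    proof -
      define z0 where "z0 = (\<Sum>p\<in>UNIV. cnj ((\<chi> x. if fst x = 0 then w $ snd x else 0) $ p) * (\<rho> *v (\<chi> x. if fst x = 0 then w $ snd x else 0)) $ p)"
      define z1 where "z1 = (\<Sum>p\<in>UNIV. cnj ((\<chi> x. if fst x = 1 then w $ snd x else 0) $ p) * (\<rho> *v (\<chi> x. if fst x = 1 then w $ snd x else 0)) $ p)"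
      have e: "(\<Sum>k\<in>UNIV. cnj (w $ k) * (ptrS \<rho> *v w) $ k) = z0 + z1" unfolding z0_def z1_def by (rule qf_ptrS)
      have "Im z0 = 0 \<and> 0 \<le> Re z0" unfolding z0_def by (rule Q)
      moreover have "Im z1 = 0 \<and> 0 \<le> Re z1" unfolding z1_def by (rule Q)
      ultimately show ?thesis unfolding e by simp
    qed
  qed
  moreover have "trace (ptrS \<rho>) = trace \<rho>" by (simp add: trace_def ptrS_def sum22 sum2 algebra_simps)
  ultimately show ?thesis using assms by (simp add: density_def)
qed

lemma trace_ptrE: "trace (ptrE \<rho>) = trace \<rho>" by (simp add: trace_def ptrE_def sum22 sum2 algebra_simps)


(* ---- part T10 ---- *)


lemma unitary_mult: assumes "unitary_op A" "unitary_op B" shows "unitary_op (A ** B)"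
proof -
  have a: "adj A ** A = mat 1" "A ** adj A = mat 1" and b: "adj B ** B = mat 1" "B ** adj B = mat 1"
    using assms by (simp_all add: unitary_op_def)
  have "adj (A ** B) ** (A ** B) = adj B ** (adj A ** A) ** B" by (simp add: adj_mult matrix_mul_assoc)
  also have "... = mat 1" using a b by simp
  finally have 1: "adj (A ** B) ** (A ** B) = mat 1" .
  have "(A ** B) ** adj (A ** B) = A ** (B ** adj B) ** adj A" by (simp add: adj_mult matrix_mul_assoc)
  also have "... = mat 1" using a b by simp
  finally show ?thesis using 1 by (simp add: unitary_op_def)
qed

lemma unitary_adj: "unitary_op A \<Longrightarrow> unitary_op (adj A)"
  by (simp add: unitary_op_def)

lemma unitary_one: "unitary_op (mat 1 :: complex^'n^'n)"
  by (simp add: unitary_op_def)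

definition Cg :: qop where
  "Cg = (\<chi> i j. if i = 0 then (if j = 0 then (1 - \<i>)/2 else (-1 - \<i>)/2) else (if j = 0 then (1 - \<i>)/2 else (1 + \<i>)/2))"

lemma Cg_unitary: "unitary_op Cg"
  unfolding unitary_op_def vec_eq_iff all2
  by (simp add: Cg_def adj_def matrix_matrix_mult_def mat_def sum2 field_simps)

lemma cliff1: "bellm e1 e2 e3 e4 = (Cg \<otimes>\<^sub>q Cg) ** bellm e3 e1 e2 e4 ** adj (Cg \<otimes>\<^sub>q Cg)"
  unfolding vec_eq_iff all22
  by (simp add: matrix_matrix_mult_def bellm_def tensor_def adj_def Cg_def sum22 field_simps)

lemma cliff2: "bellm e1 e2 e3 e4 = (adj Cg \<otimes>\<^sub>q adj Cg) ** bellm e2 e3 e1 e4 ** adj (adj Cg \<otimes>\<^sub>q adj Cg)"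
  unfolding vec_eq_iff all22
  by (simp add: matrix_matrix_mult_def bellm_def tensor_def adj_def Cg_def sum22 field_simps)

lemma unitary_tensor: assumes "unitary_op A" "unitary_op B" shows "unitary_op (A \<otimes>\<^sub>q B)"
  using assms by (simp add: unitary_op_def adj_tensor tensor_mult tensor_one)

lemma k01_real: "cnj (k01 p q r w) = k01 p q r w"
  by (simp add: k01_def algebra_simps)
lemma k10_real: "cnj (k10 p q r w) = k10 p q r w"
  by (simp add: k10_def algebra_simps)

lemma cnj_real_im: "Im z = 0 \<Longrightarrow> cnj z = z"
  by (simp add: complex_eq_iff)

lemma Hs:
  fixes e1 e2 e3 e4 :: complex
  assumes u: "cnj e1 * e1 = 1" "cnj e2 * e2 = 1" "cnj e3 * e3 = 1" "cnj e4 * e4 = 1"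
    and im1: "Im (cnj (e1+e2) * (e3+e4)) = 0" and im2: "Im (cnj (e1-e2) * (e3-e4)) = 0"
  shows "cnj ((e1+e2)/2) * ((e1-e2)/2) + cnj ((e1-e2)/2) * ((e1+e2)/2) = 0"
    and "cnj ((e3+e4)/2) * ((e3-e4)/2) + cnj ((e3-e4)/2) * ((e3+e4)/2) = 0"
    and "cnj ((e1+e2)/2) * ((e1+e2)/2) + cnj ((e1-e2)/2) * ((e1-e2)/2) = cnj ((e3+e4)/2) * ((e3+e4)/2) + cnj ((e3-e4)/2) * ((e3-e4)/2)"
    and "cnj ((e1+e2)/2) * ((e3+e4)/2) = cnj ((e3+e4)/2) * ((e1+e2)/2)"
    and "cnj ((e1-e2)/2) * ((e3-e4)/2) = cnj ((e3-e4)/2) * ((e1-e2)/2)"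
proof -
  have "cnj ((e1+e2)/2) * ((e1-e2)/2) + cnj ((e1-e2)/2) * ((e1+e2)/2) = (cnj e1 * e1 - cnj e2 * e2)/2"
    by (simp add: field_simps)
  then show "cnj ((e1+e2)/2) * ((e1-e2)/2) + cnj ((e1-e2)/2) * ((e1+e2)/2) = 0" using u by simp
  have "cnj ((e3+e4)/2) * ((e3-e4)/2) + cnj ((e3-e4)/2) * ((e3+e4)/2) = (cnj e3 * e3 - cnj e4 * e4)/2"
    by (simp add: field_simps)
  then show "cnj ((e3+e4)/2) * ((e3-e4)/2) + cnj ((e3-e4)/2) * ((e3+e4)/2) = 0" using u by simp
  have "cnj ((e1+e2)/2) * ((e1+e2)/2) + cnj ((e1-e2)/2) * ((e1-e2)/2) = (cnj e1 * e1 + cnj e2 * e2)/2"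
    by (simp add: field_simps)
  moreover have "cnj ((e3+e4)/2) * ((e3+e4)/2) + cnj ((e3-e4)/2) * ((e3-e4)/2) = (cnj e3 * e3 + cnj e4 * e4)/2"
    by (simp add: field_simps)
  ultimately show "cnj ((e1+e2)/2) * ((e1+e2)/2) + cnj ((e1-e2)/2) * ((e1-e2)/2) = cnj ((e3+e4)/2) * ((e3+e4)/2) + cnj ((e3-e4)/2) * ((e3-e4)/2)"
    using u by simp
  have c1: "cnj (cnj (e1+e2) * (e3+e4)) = cnj (e1+e2) * (e3+e4)" using im1 by (rule cnj_real_im)
  have c2: "cnj (cnj (e1-e2) * (e3-e4)) = cnj (e1-e2) * (e3-e4)" using im2 by (rule cnj_real_im)
  have "cnj ((e1+e2)/2) * ((e3+e4)/2) = (cnj (e1+e2) * (e3+e4)) / 4" by simp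
  also have "... = cnj (cnj (e1+e2) * (e3+e4)) / 4" using c1 by simp
  also have "... = cnj ((e3+e4)/2) * ((e1+e2)/2)" by (simp add: mult.commute)
  finally show "cnj ((e1+e2)/2) * ((e3+e4)/2) = cnj ((e3+e4)/2) * ((e1+e2)/2)" .
  have "cnj ((e1-e2)/2) * ((e3-e4)/2) = (cnj (e1-e2) * (e3-e4)) / 4" by simp
  also have "... = cnj (cnj (e1-e2) * (e3-e4)) / 4" using c2 by simp
  also have "... = cnj ((e3-e4)/2) * ((e1-e2)/2)" by (simp add: mult.commute)
  finally show "cnj ((e1-e2)/2) * ((e3-e4)/2) = cnj ((e3-e4)/2) * ((e1-e2)/2)" .
qed

lemma reduce:
  assumes L2: "adj L2 ** L2 = mat 1"
  shows "ptrE (((L1 \<otimes>\<^sub>q L2) ** Om ** (R1 \<otimes>\<^sub>q R2)) ** ((V \<otimes>\<^sub>q mat 1) ** X ** adj (V \<otimes>\<^sub>q mat 1)) ** adj ((L1 \<otimes>\<^sub>q L2) ** Om ** (R1 \<otimes>\<^sub>q R2)))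
       = L1 ** ptrE (Om ** (((R1 ** V) \<otimes>\<^sub>q mat 1) ** ((mat 1 \<otimes>\<^sub>q R2) ** X ** adj (mat 1 \<otimes>\<^sub>q R2)) ** adj ((R1 ** V) \<otimes>\<^sub>q mat 1)) ** adj Om) ** adj L1"
proof -
  have W: "((R1 ** V) \<otimes>\<^sub>q mat 1) ** (mat 1 \<otimes>\<^sub>q R2) = (R1 \<otimes>\<^sub>q R2) ** (V \<otimes>\<^sub>q mat 1)"
    by (simp add: tensor_mult)
  have e1: "((R1 ** V) \<otimes>\<^sub>q mat 1) ** ((mat 1 \<otimes>\<^sub>q R2) ** X ** adj (mat 1 \<otimes>\<^sub>q R2)) ** adj ((R1 ** V) \<otimes>\<^sub>q mat 1)
     = (((R1 ** V) \<otimes>\<^sub>q mat 1) ** (mat 1 \<otimes>\<^sub>q R2)) ** X ** adj (((R1 ** V) \<otimes>\<^sub>q mat 1) ** (mat 1 \<otimes>\<^sub>q R2))"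
    by (simp add: adj_mult matrix_mul_assoc)
  have e2: "((L1 \<otimes>\<^sub>q L2) ** Om ** (R1 \<otimes>\<^sub>q R2)) ** ((V \<otimes>\<^sub>q mat 1) ** X ** adj (V \<otimes>\<^sub>q mat 1)) ** adj ((L1 \<otimes>\<^sub>q L2) ** Om ** (R1 \<otimes>\<^sub>q R2))
     = (L1 \<otimes>\<^sub>q L2) ** (Om ** (((R1 \<otimes>\<^sub>q R2) ** (V \<otimes>\<^sub>q mat 1)) ** X ** adj ((R1 \<otimes>\<^sub>q R2) ** (V \<otimes>\<^sub>q mat 1))) ** adj Om) ** adj (L1 \<otimes>\<^sub>q L2)"
    by (simp add: adj_mult matrix_mul_assoc)
  show ?thesis unfolding e1 W e2 ptrE_conj[OF L2] ..
qed

lemma mat_add_rdistrib: "((A::'a::semiring_1^'n^'m) + B) ** C = A ** C + B ** C"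
  by (simp add: vec_eq_iff matrix_matrix_mult_def sum.distrib algebra_simps)
lemma ptrE_add: "ptrE (A + B) = ptrE A + ptrE B"
  by (simp add: vec_eq_iff ptrE_def sum.distrib)

lemma bloch_mult_E01: "bloch_rot (X ** E01 t) = bloch_rot X ** givens 0 1 (2 * t)"
  using E01_unitary[of t] by (simp add: unitary_op_def bloch_mult bloch_E01)
lemma bloch_mult_E12: "bloch_rot (X ** E12 t) = bloch_rot X ** givens 1 2 (2 * t)"
  using E12_unitary[of t] by (simp add: unitary_op_def bloch_mult bloch_E12)

lemma tau_real: assumes "adj Y = Y" shows "tau Y i j = of_real (Re (tau Y i j))"
proof -
  have "cnj (tau Y i j) = tau Y i j" using tau_adj[of Y i j] assms by simp
  then have "Im (tau Y i j) = 0" by (metis Reals_cnj_iff complex_is_Real_iff)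
  then show ?thesis by (simp add: complex_eq_iff)
qed

lemma real_of_cnj: "cnj z = z \<Longrightarrow> z = of_real (Re z)"
  by (metis Reals_cnj_iff of_real_Re)


(* ---- part T11 ---- *)


lemma one_unit: "adj (mat 1 :: qop) ** mat 1 = mat 1" by simp

lemma ig01: "is_givens (givens 0 1 t)"
  unfolding is_givens_def by (rule exI[of _ 0], rule exI[of _ 1]) auto
lemma ig12: "is_givens (givens 1 2 t)"
  unfolding is_givens_def by (rule exI[of _ 1], rule exI[of _ 2]) auto

lemma core:
  fixes e1 e2 e3 e4 :: complex and L1 L2 R1 R2 :: qop and \<rho> :: qqop
  assumes u: "cnj e1 * e1 = 1" "cnj e2 * e2 = 1" "cnj e3 * e3 = 1" "cnj e4 * e4 = 1"
    and im1: "Im (cnj (e1+e2) * (e3+e4)) = 0" and im2: "Im (cnj (e1-e2) * (e3-e4)) = 0"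
    and uL2: "unitary_op L2" and uR1: "unitary_op R1" and uR2: "unitary_op R2"
    and dens: "density \<rho>"
  shows "\<exists>V \<zeta>. unitary_op V \<and> product_of_givens (bloch_rot V) \<and> density \<zeta> \<and>
     ptrE (((L1 \<otimes>\<^sub>q L2) ** bellm e1 e2 e3 e4 ** (R1 \<otimes>\<^sub>q R2)) ** ((V \<otimes>\<^sub>q mat 1) ** \<rho> ** adj (V \<otimes>\<^sub>q mat 1))
        ** adj ((L1 \<otimes>\<^sub>q L2) ** bellm e1 e2 e3 e4 ** (R1 \<otimes>\<^sub>q R2)))
   = ptrE (((L1 \<otimes>\<^sub>q L2) ** bellm e1 e2 e3 e4 ** (R1 \<otimes>\<^sub>q R2)) ** ((V ** ptrE \<rho> ** adj V) \<otimes>\<^sub>q \<zeta>)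
        ** adj ((L1 \<otimes>\<^sub>q L2) ** bellm e1 e2 e3 e4 ** (R1 \<otimes>\<^sub>q R2)))"
proof -
  define p where "p = (e1+e2)/2"
  define q where "q = (e1-e2)/2"
  define r where "r = (e3+e4)/2"
  define w where "w = (e3-e4)/2"
  have Om: "bellm e1 e2 e3 e4 = omm p q r w" by (simp add: bellm_omm p_def q_def r_def w_def)
  note H = Hs[OF u im1 im2, folded p_def q_def r_def w_def]
  define \<zeta> where "\<zeta> = ptrS \<rho>"
  have dz: "density \<zeta>" unfolding \<zeta>_def by (rule density_ptrS[OF dens])
  have trz: "trace \<zeta> = 1" using dz by (simp add: density_def)
  have trr: "trace (ptrE \<rho>) = 1" using dens by (simp add: density_def trace_ptrE)
  have hr: "adj \<rho> = \<rho>" by (rule density_herm[OF dens])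
  define P where "P = ptrE \<rho> \<otimes>\<^sub>q \<zeta>"
  define Dl where "Dl = \<rho> - P"
  have pEchi: "ptrE Dl = 0" unfolding Dl_def P_def ptrE_diff ptrE_tensor trz by (simp add: vec_eq_iff)
  have pSchi: "ptrS Dl = 0" unfolding Dl_def P_def ptrS_diff ptrS_tensor trr by (simp add: vec_eq_iff \<zeta>_def)
  have hchi: "adj Dl = Dl" unfolding Dl_def P_def \<zeta>_def adj_diff adj_tensor adj_ptrE adj_ptrS hr ..
  have uR2': "adj R2 ** R2 = mat 1" using uR2 by (simp add: unitary_op_def)
  define Y0 where "Y0 = (mat 1 \<otimes>\<^sub>q R2) ** Dl ** adj (mat 1 \<otimes>\<^sub>q R2)"
  have pEY0: "ptrE Y0 = 0" unfolding Y0_def ptrE_conj[OF uR2'] pEchi by simp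
  have pSY0: "ptrS Y0 = 0" unfolding Y0_def ptrS_conj[OF one_unit] pSchi by simp
  have hY0: "adj Y0 = Y0" unfolding Y0_def by (simp add: adj_mult hchi matrix_mul_assoc)
  define C0 :: "real^3^3" where "C0 = (\<chi> i j. Re (tau Y0 i j))"
  have tY0: "\<And>i j. tau Y0 i j = of_real (C0 $ i $ j)" unfolding C0_def using tau_real[OF hY0] by simp
  define N where "N = bloch_rot R1"
  have orthN: "N ** transpose N = mat 1" unfolding N_def by (rule bloch_orth[OF uR1])
  obtain t1 t2 t3 t4 t5 t6 where
    c1: "(N ** (givens 0 1 t1 ** givens 1 2 t2 ** givens 0 1 t3 ** givens 1 2 t4 ** givens 0 1 t5 ** givens 1 2 t6) ** C0)$2$0 = 0"
    and c2: "(N ** (givens 0 1 t1 ** givens 1 2 t2 ** givens 0 1 t3 ** givens 1 2 t4 ** givens 0 1 t5 ** givens 1 2 t6) ** C0)$2$1 = 0"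
    and c3: "Re (k01 p q r w) * (N ** (givens 0 1 t1 ** givens 1 2 t2 ** givens 0 1 t3 ** givens 1 2 t4 ** givens 0 1 t5 ** givens 1 2 t6) ** C0)$0$1
     + Re (k10 p q r w) * (N ** (givens 0 1 t1 ** givens 1 2 t2 ** givens 0 1 t3 ** givens 1 2 t4 ** givens 0 1 t5 ** givens 1 2 t6) ** C0)$1$0 = 0"
    using construct[OF orthN, of C0 "Re (k01 p q r w)" "Re (k10 p q r w)"] by blast
  define G where "G = givens 0 1 t1 ** givens 1 2 t2 ** givens 0 1 t3 ** givens 1 2 t4 ** givens 0 1 t5 ** givens 1 2 t6"
  define V where "V = E01 (t1/2) ** E12 (t2/2) ** E01 (t3/2) ** E12 (t4/2) ** E01 (t5/2) ** E12 (t6/2)"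
  have uV: "unitary_op V" unfolding V_def
    by (intro unitary_mult E01_unitary E12_unitary)
  have bV: "bloch_rot V = G" unfolding V_def G_def
    by (simp add: bloch_mult_E01 bloch_mult_E12 bloch_E01)
  have pg: "product_of_givens (bloch_rot V)"
  proof -
    let ?gs = "[givens 0 1 t1, givens 1 2 t2, givens 0 1 t3, givens 1 2 t4, givens 0 1 t5, givens 1 2 t6]"
    have "list_all is_givens ?gs" by (simp add: ig01 ig12)
    moreover have "bloch_rot V = foldr (**) ?gs (mat 1)" unfolding bV G_def by (simp add: matrix_mul_assoc)
    ultimately show ?thesis unfolding product_of_givens_def by blast
  qed
  have uRV: "unitary_op (R1 ** V)" by (rule unitary_mult[OF uR1 uV])
  have uRV': "adj (R1 ** V) ** (R1 ** V) = mat 1" using uRV by (simp add: unitary_op_def)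
  define Y where "Y = ((R1 ** V) \<otimes>\<^sub>q mat 1) ** Y0 ** adj ((R1 ** V) \<otimes>\<^sub>q mat 1)"
  have pEY: "ptrE Y = 0" unfolding Y_def ptrE_conj[OF one_unit] pEY0 by simp
  have pSY: "ptrS Y = 0" unfolding Y_def ptrS_conj[OF uRV'] pSY0 by simp
  have bRV: "bloch_rot (R1 ** V) = N ** G"
    unfolding N_def bV[symmetric] by (rule bloch_mult) (use uV in \<open>simp add: unitary_op_def\<close>)
  have tY: "\<And>i j. tau Y i j = of_real ((N ** G ** C0) $ i $ j)"
  proof -
    fix i j
    have "tau Y i j = (\<Sum>k\<in>UNIV. Oc (R1 ** V) i k * tau Y0 k j)" unfolding Y_def by (rule tau_conj[OF pSY0])
    also have "... = (\<Sum>k\<in>UNIV. of_real ((N ** G) $ i $ k) * of_real (C0 $ k $ j))"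
      by (simp only: Oc_of_real tY0 bRV)
    also have "... = of_real ((N ** G ** C0) $ i $ j)" by (simp add: matrix_matrix_mult_def)
    finally show "tau Y i j = of_real ((N ** G ** C0) $ i $ j)" .
  qed
  have T1: "tau Y 2 0 = 0" using c1 unfolding tY G_def by simp
  have T2: "tau Y 2 1 = 0" using c2 unfolding tY G_def by simp
  have k01r: "k01 p q r w = of_real (Re (k01 p q r w))" by (rule real_of_cnj[OF k01_real])
  have k10r: "k10 p q r w = of_real (Re (k10 p q r w))" by (rule real_of_cnj[OF k10_real])
  have K: "k01 p q r w * tau Y 0 1 + k10 p q r w * tau Y 1 0 = 0"
  proof -
    have "k01 p q r w * tau Y 0 1 + k10 p q r w * tau Y 1 0
        = of_real (Re (k01 p q r w) * (N ** G ** C0)$0$1 + Re (k10 p q r w) * (N ** G ** C0)$1$0)"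
      by (subst k01r, subst k10r) (simp add: tY)
    also have "... = 0" using c3 unfolding G_def by simp
    finally show ?thesis .
  qed
  have Z: "ptrE (omm p q r w ** Y ** adj (omm p q r w)) = 0"
    by (rule Phi_zero[OF pEY pSY H(1) H(2) H(3) H(4) H(5) T1 T2 K])
  have uL2': "adj L2 ** L2 = mat 1" using uL2 by (simp add: unitary_op_def)
  define U where "U = (L1 \<otimes>\<^sub>q L2) ** bellm e1 e2 e3 e4 ** (R1 \<otimes>\<^sub>q R2)"
  have zero: "ptrE (U ** ((V \<otimes>\<^sub>q mat 1) ** Dl ** adj (V \<otimes>\<^sub>q mat 1)) ** adj U) = 0"
    unfolding U_def reduce[OF uL2'] unfolding Om Y0_def[symmetric] Y_def[symmetric] Z by simp
  have tens: "(V ** ptrE \<rho> ** adj V) \<otimes>\<^sub>q \<zeta> = (V \<otimes>\<^sub>q mat 1) ** P ** adj (V \<otimes>\<^sub>q mat 1)"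
    unfolding P_def by (simp add: adj_tensor tensor_mult)
  have rho: "\<rho> = Dl + P" unfolding Dl_def by simp
  have "ptrE (U ** ((V \<otimes>\<^sub>q mat 1) ** \<rho> ** adj (V \<otimes>\<^sub>q mat 1)) ** adj U)
     = ptrE (U ** ((V \<otimes>\<^sub>q mat 1) ** Dl ** adj (V \<otimes>\<^sub>q mat 1)) ** adj U)
     + ptrE (U ** ((V \<otimes>\<^sub>q mat 1) ** P ** adj (V \<otimes>\<^sub>q mat 1)) ** adj U)"
    unfolding rho by (simp add: matrix_add_ldistrib mat_add_rdistrib ptrE_add)
  also have "... = ptrE (U ** ((V ** ptrE \<rho> ** adj V) \<otimes>\<^sub>q \<zeta>) ** adj U)"
    unfolding zero tens by simp
  finally show ?thesis using uV pg dz unfolding U_def by blast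
qed


(* ---- part T12 ---- *)


lemma Sset_sin: assumes "a \<in> Sset" shows "sin (2 * a) = 0"
proof -
  obtain n :: nat where "a = real n * pi / 2" using assms unfolding Sset_def by blast
  then have "2 * a = real n * pi" by simp
  then show ?thesis by simp
qed

lemma exp_cis: "exp (- \<i> * complex_of_real x) = cis (- x)" "exp (\<i> * complex_of_real x) = cis x"
  by (simp_all add: cis_conv_exp)

lemma omega_cis: "Omega a1 a2 a3 = bellm (cis (- (a3+a1-a2))) (cis (- (a3-a1+a2))) (cis (- (a1+a2-a3))) (cis (a1+a2+a3))"
  unfolding Omega_bell exp_cis ..

lemma cis_unit: "cnj (cis x) * cis x = 1"
  by (simp add: cis_cnj cis_mult)

lemma cis4: "cnj (cis x1 + cis x2) * (cis x3 + cis x4) = cis (x3 - x1) + cis (x4 - x1) + cis (x3 - x2) + cis (x4 - x2)"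
  by (simp add: cis_cnj distrib_left distrib_right cis_mult)
lemma cis4m: "cnj (cis x1 - cis x2) * (cis x3 - cis x4) = cis (x3 - x1) - cis (x4 - x1) - cis (x3 - x2) + cis (x4 - x2)"
  by (simp add: cis_cnj left_diff_distrib right_diff_distrib cis_mult)

lemma conds:
  assumes s: "sin (2*b3) = 0" and x: "x1 = -(b3+b1-b2)" "x2 = -(b3-b1+b2)" "x3 = -(b1+b2-b3)" "x4 = b1+b2+b3"
  shows "Im (cnj (cis x1 + cis x2) * (cis x3 + cis x4)) = 0"
    and "Im (cnj (cis x1 - cis x2) * (cis x3 - cis x4)) = 0"
proof -
  have d: "x3 - x1 = 2*b3 - 2*b2" "x4 - x1 = 2*b3 + 2*b1" "x3 - x2 = 2*b3 - 2*b1" "x4 - x2 = 2*b3 + 2*b2"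
    using x by simp_all
  show "Im (cnj (cis x1 + cis x2) * (cis x3 + cis x4)) = 0"
    unfolding cis4 d by (simp add: sin_add sin_diff s)
  show "Im (cnj (cis x1 - cis x2) * (cis x3 - cis x4)) = 0"
    unfolding cis4m d by (simp add: sin_add sin_diff s)
qed

lemma conj_bell: "(L1 \<otimes>\<^sub>q L2) ** (X ** B ** adj X) ** (R1 \<otimes>\<^sub>q R2) = (L1 \<otimes>\<^sub>q L2) ** X ** B ** (adj X ** (R1 \<otimes>\<^sub>q R2))"
  by (simp add: matrix_mul_assoc)

theorem theorem1:
  fixes a1 a2 a3 :: real
    and L1 L2 R1 R2 :: "complex^2^2"
    and \<rho> :: "complex^(2 \<times> 2)^(2 \<times> 2)"
  assumes two_param:
      "(a1 \<in> Sset \<and> a2 \<notin> Sset \<and> a3 \<notin> Sset)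
     \<or> (a1 \<notin> Sset \<and> a2 \<in> Sset \<and> a3 \<notin> Sset)
     \<or> (a1 \<notin> Sset \<and> a2 \<notin> Sset \<and> a3 \<in> Sset)"
    and "unitary_op L1" and "unitary_op L2" and "unitary_op R1" and "unitary_op R2"
    and "density \<rho>"
  shows "let U = (L1 \<otimes>\<^sub>q L2) ** Omega a1 a2 a3 ** (R1 \<otimes>\<^sub>q R2) in
         \<exists>V \<zeta>. unitary_op V \<and> product_of_givens (bloch_rot V) \<and> density \<zeta> \<and>
           ptrE (U ** ((V \<otimes>\<^sub>q mat 1) ** \<rho> ** adj (V \<otimes>\<^sub>q mat 1)) ** adj U)
         = ptrE (U ** ((V ** ptrE \<rho> ** adj V) \<otimes>\<^sub>q \<zeta>) ** adj U)"
proof -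
  note uL1 = assms(2) and uL2 = assms(3) and uR1 = assms(4) and uR2 = assms(5) and dens = assms(6)
  define E1 where "E1 = cis (- (a3+a1-a2))"
  define E2 where "E2 = cis (- (a3-a1+a2))"
  define E3 where "E3 = cis (- (a1+a2-a3))"
  define E4 where "E4 = cis (a1+a2+a3)"
  have Om: "Omega a1 a2 a3 = bellm E1 E2 E3 E4" unfolding omega_cis E1_def E2_def E3_def E4_def ..
  have u: "cnj E1 * E1 = 1" "cnj E2 * E2 = 1" "cnj E3 * E3 = 1" "cnj E4 * E4 = 1"
    unfolding E1_def E2_def E3_def E4_def by (simp_all only: cis_unit)
  have uC: "unitary_op Cg" "unitary_op (adj Cg)" using Cg_unitary unitary_adj by blast+
  from two_param consider (c1) "a1 \<in> Sset" | (c2) "a2 \<in> Sset" | (c3) "a3 \<in> Sset" by blast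
  then show ?thesis
  proof cases
    case c3
    have s: "sin (2*a3) = 0" by (rule Sset_sin[OF c3])
    note cc = conds[OF s refl refl refl refl, of a1 a2, folded E1_def E2_def E3_def E4_def]
    show ?thesis unfolding Let_def Om
      by (rule core[OF u cc uL2 uR1 uR2 dens])
  next
    case c1
    have s: "sin (2*a1) = 0" by (rule Sset_sin[OF c1])
    have x: "E3 = cis (- (a1 + a2 - a3))" "E1 = cis (- (a1 - a2 + a3))" "E2 = cis (- (a2 + a3 - a1))" "E4 = cis (a2 + a3 + a1)"
      unfolding E1_def E2_def E3_def E4_def by (simp_all add: algebra_simps)
    note cc = conds[OF s refl refl refl refl, of a2 a3, folded x]
    have U: "(L1 \<otimes>\<^sub>q L2) ** Omega a1 a2 a3 ** (R1 \<otimes>\<^sub>q R2)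
       = ((L1 ** Cg) \<otimes>\<^sub>q (L2 ** Cg)) ** bellm E3 E1 E2 E4 ** ((adj Cg ** R1) \<otimes>\<^sub>q (adj Cg ** R2))"
      unfolding Om cliff1[of E1 E2 E3 E4] conj_bell by (simp add: tensor_mult adj_tensor matrix_mul_assoc)
    show ?thesis unfolding Let_def U
      by (rule core[OF u(3) u(1) u(2) u(4) cc unitary_mult[OF uL2 uC(1)] unitary_mult[OF uC(2) uR1]
                       unitary_mult[OF uC(2) uR2] dens])
  next
    case c2
    have s: "sin (2*a2) = 0" by (rule Sset_sin[OF c2])
    have x: "E2 = cis (- (a2 + a3 - a1))" "E3 = cis (- (a2 - a3 + a1))" "E1 = cis (- (a3 + a1 - a2))" "E4 = cis (a3 + a1 + a2)"
      unfolding E1_def E2_def E3_def E4_def by (simp_all add: algebra_simps)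
    note cc = conds[OF s refl refl refl refl, of a3 a1, folded x]
    have U: "(L1 \<otimes>\<^sub>q L2) ** Omega a1 a2 a3 ** (R1 \<otimes>\<^sub>q R2)
       = ((L1 ** adj Cg) \<otimes>\<^sub>q (L2 ** adj Cg)) ** bellm E2 E3 E1 E4 ** ((adj (adj Cg) ** R1) \<otimes>\<^sub>q (adj (adj Cg) ** R2))"
      unfolding Om cliff2[of E1 E2 E3 E4] conj_bell by (simp only: tensor_mult adj_tensor matrix_mul_assoc)
    show ?thesis unfolding Let_def U
      by (rule core[OF u(2) u(3) u(1) u(4) cc unitary_mult[OF uL2 uC(2)] unitary_mult[OF unitary_adj[OF uC(2)] uR1]
                       unitary_mult[OF unitary_adj[OF uC(2)] uR2] dens])
  qed
qed


end
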